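(* Let $M$ be a closed manifold immersed in $(V,\omega)=(\mathbb{R}^{2d},\sum_i dx_i\wedge dy_i)$, let $\mathbf{Z}=(z_1,\dots,z_n,z_{n+1})$ be an outer symplectic billiard orbit, and let $A(\mathbf{Z})=\tfrac12\sum_{i=1}^n\omega(z_i,z_{i+1})$ and $\mathbf{Q}=(Q_1,\dots,Q_n)$, $Q_i=\tfrac12(z_i+z_{i+1})$. If $\mathbf{Z}$ is an $n$-periodic orbit ($z_{n+1}=z_1$) with $n$ odd, then $A(\mathbf{Z})=F(\mathbf{Q})$, where $F(Q_1,\dots,Q_n)=2\sum_{1\le i<j\le n}(-1)^{i+j-1}\omega(Q_i,Q_j)$. If $\mathbf{Z}$ is an $n$-link orbit connecting $L_1=\mathbb{R}^d_x\times\{0\}$ and $L_2=\{0\}\times\mathbb{R}^d_y$, then $A(\mathbf{Z})=G(\mathbf{Q})$, where, writing $Q_i=(q_i,q_i')$, $G(\mathbf{Q})=2\sum_{i=1}^nq_i\cdot q_i'+4\sum_{1\le i<j\le n}(-1)^{j-i}q_j\cdot q_i'$.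
   Context: $\omega((x,y),(x',y'))=x\cdot y'-y\cdot x'$. Two points $z,z'$ are in outer symplectic billiard correspondence with respect to $M$ if $Q=\tfrac12(z+z')$ is a point of $M$ and $\omega(z'-z,\zeta)=0$ for all $\zeta\in T_QM$. An $n$-periodic orbit is $(z_1,\dots,z_n)$ with $z_i,z_{i+1}$ in correspondence for all $i$ (indices mod $n$). An $n$-link orbit connecting $L_1$ and $L_2$ is $(z_1,\dots,z_{n+1})$ with $z_1\in L_1$, $z_{n+1}\in L_2$ and $z_i,z_{i+1}$ in correspondence for $i=1,\dots,n$. *)

theory Defs
  imports "HOL-Analysis.Analysis"
begin

type_synonym 'd sympl = "(real ^ 'd) \<times> (real ^ 'd)"

definition omega :: "'d::finite sympl \<Rightarrow> 'd sympl \<Rightarrow> real" where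
  "omega z w = fst z \<bullet> snd w - snd z \<bullet> fst w"

text \<open>An immersed submanifold M is represented by its set of pointed tangent planes:
  pairs (Q, T) where Q is a point of M and T the tangent space of M at Q along a branch
  of the immersion (at a self-intersection point there is one pair per branch).\<close>
definition immersed_closed_data :: "('d::finite sympl \<times> 'd sympl set) set \<Rightarrow> bool" where
  "immersed_closed_data P \<longleftrightarrow> compact (fst ` P) \<and> (\<forall>(Q,T)\<in>P. subspace T)"

definition corresp :: "('d::finite sympl \<times> 'd sympl set) set \<Rightarrow> 'd sympl \<Rightarrow> 'd sympl \<Rightarrow> bool" where
  "corresp P z z' \<longleftrightarrow> (\<exists>(Q,T)\<in>P. Q = (1/2) *\<^sub>R (z + z') \<and> (\<forall>\<zeta>\<in>T. omega (z' - z) \<zeta> = 0))"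

text \<open>Orbits are indexed z 1, ..., z (n+1).\<close>
definition periodic_orbit :: "('d::finite sympl \<times> 'd sympl set) set \<Rightarrow> nat \<Rightarrow> (nat \<Rightarrow> 'd sympl) \<Rightarrow> bool" where
  "periodic_orbit P n z \<longleftrightarrow> n \<ge> 1 \<and> z (n+1) = z 1 \<and> (\<forall>i\<in>{1..n}. corresp P (z i) (z (i+1)))"

definition L1 :: "'d::finite sympl set" where "L1 = {z. snd z = 0}"
definition L2 :: "'d::finite sympl set" where "L2 = {z. fst z = 0}"

definition link_orbit :: "('d::finite sympl \<times> 'd sympl set) set \<Rightarrow> nat \<Rightarrow> 'd sympl set \<Rightarrow> 'd sympl set \<Rightarrow> (nat \<Rightarrow> 'd sympl) \<Rightarrow> bool" where
  "link_orbit P n A B z \<longleftrightarrow> n \<ge> 1 \<and> z 1 \<in> A \<and> z (n+1) \<in> B \<and> (\<forall>i\<in>{1..n}. corresp P (z i) (z (i+1)))"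

definition action :: "nat \<Rightarrow> (nat \<Rightarrow> 'd::finite sympl) \<Rightarrow> real" where
  "action n z = (1/2) * (\<Sum>i=1..n. omega (z i) (z (i+1)))"

definition midpts :: "(nat \<Rightarrow> 'd::finite sympl) \<Rightarrow> nat \<Rightarrow> 'd sympl" where
  "midpts z i = (1/2) *\<^sub>R (z i + z (i+1))"

definition Ffun :: "nat \<Rightarrow> (nat \<Rightarrow> 'd::finite sympl) \<Rightarrow> real" where
  "Ffun n Q = 2 * (\<Sum>j=1..n. \<Sum>i=1..<j. (-1) ^ (i + j - 1) * omega (Q i) (Q j))"

definition Gfun :: "nat \<Rightarrow> (nat \<Rightarrow> 'd::finite sympl) \<Rightarrow> real" where
  "Gfun n Q = 2 * (\<Sum>i=1..n. fst (Q i) \<bullet> snd (Q i))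
     + 4 * (\<Sum>j=1..n. \<Sum>i=1..<j. (-1) ^ (j - i) * (fst (Q j) \<bullet> snd (Q i)))"

end

theory Submission
  imports Defs
begin

lemma om_add_l: "omega (x + y) w = omega x w + omega y w"
  unfolding omega_def by (simp add: inner_add_left)
lemma om_add_r: "omega w (x + y) = omega w x + omega w y"
  unfolding omega_def by (simp add: inner_add_right)
lemma om_diff_r: "omega w (x - y) = omega w x - omega w y"
  unfolding omega_def by (simp add: inner_diff_right)
lemma om_scale_l: "omega (a *\<^sub>R x) w = a * omega x w"
  unfolding omega_def by (simp add: algebra_simps)
lemma om_scale_r: "omega w (a *\<^sub>R x) = a * omega w x"
  unfolding omega_def by (simp add: algebra_simps)
lemma om_self: "omega x x = 0"
  unfolding omega_def by (simp add: inner_commute)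
lemma om_zero_l: "omega 0 w = 0"
  unfolding omega_def by (simp add: zero_prod_def)
lemma om_sum_l: "omega (\<Sum>i\<in>A. f i) w = (\<Sum>i\<in>A. omega (f i) w)"
  by (induction A rule: infinite_finite_induct) (auto simp: om_add_l om_zero_l)

lemma zform:
  "z (Suc k) = ((-1)^k) *\<^sub>R z 1 + 2 *\<^sub>R (\<Sum>i=1..k. ((-1)^(k+i)) *\<^sub>R midpts z i)"
proof (induction k)
  case 0 then show ?case by simp
next
  case (Suc k)
  have "z (Suc (Suc k)) = 2 *\<^sub>R midpts z (Suc k) - z (Suc k)"
    unfolding midpts_def by (simp add: scaleR_add_right)
  also have "\<dots> = ((-1)^Suc k) *\<^sub>R z 1 + 2 *\<^sub>R (\<Sum>i=1..Suc k. ((-1)^(Suc k+i)) *\<^sub>R midpts z i)"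
    unfolding Suc
    by (simp add: scaleR_sum_right sum_negf algebra_simps)
  finally show ?case .
qed

lemma keyform:
  "(\<Sum>i=1..n. omega (z i) (midpts z i)) =
     omega (z 1) (\<Sum>i=1..n. ((-1)^(i+1)) *\<^sub>R midpts z i)
     + 2 * (\<Sum>j=1..n. \<Sum>i=1..<j. (-1) ^ (i + j - 1) * omega (midpts z i) (midpts z j))"
proof (induction n)
  case 0 then show ?case by (simp add: omega_def)
next
  case (Suc n)
  have e: "omega (z (Suc n)) (midpts z (Suc n)) =
     (-1)^(n+2) * omega (z 1) (midpts z (Suc n))
     + 2 * (\<Sum>i=1..n. (-1) ^ (i + n) * omega (midpts z i) (midpts z (Suc n)))"
  proof -
    have "omega (2 *\<^sub>R (\<Sum>i=1..n. ((-1)^(n+i)) *\<^sub>R midpts z i)) (midpts z (Suc n))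
        = 2 * (\<Sum>i=1..n. (-1) ^ (i + n) * omega (midpts z i) (midpts z (Suc n)))"
      by (simp add: om_scale_l om_sum_l add.commute)
    then show ?thesis unfolding zform[of z n]
      by (simp add: om_add_l om_scale_l)
  qed
  have e2: "(\<Sum>i=1..<Suc n. (-1) ^ (i + Suc n - 1) * omega (midpts z i) (midpts z (Suc n)))
     = (\<Sum>i=1..n. (-1) ^ (i + n) * omega (midpts z i) (midpts z (Suc n)))"
    by (simp add: atLeastLessThanSuc_atLeastAtMost)
  define D where "D m = (\<Sum>j=1..m. \<Sum>i=1..<j. (-1) ^ (i + j - 1) * omega (midpts z i) (midpts z j))" for m
  define W where "W m = (\<Sum>i=1..m. ((-1::real)^(i+1)) *\<^sub>R midpts z i)" for m
  have d: "D (Suc n) = D n + (\<Sum>i=1..n. (-1) ^ (i + n) * omega (midpts z i) (midpts z (Suc n)))"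
    unfolding D_def e2[symmetric] by simp
  have w: "omega (z 1) (W (Suc n)) = omega (z 1) (W n) + (-1)^(n+2) * omega (z 1) (midpts z (Suc n))"
    unfolding W_def by (simp add: om_add_r om_scale_r)
  have l: "(\<Sum>i=1..Suc n. omega (z i) (midpts z i)) = (\<Sum>i=1..n. omega (z i) (midpts z i)) + omega (z (Suc n)) (midpts z (Suc n))"
    by simp
  show ?case
    using Suc[unfolded D_def[symmetric] W_def[symmetric]] unfolding D_def[symmetric] W_def[symmetric] l w d e
    by (simp add: algebra_simps)
qed

lemma action_eq:
  "action n z = omega (z 1) (\<Sum>i=1..n. ((-1)^(i+1)) *\<^sub>R midpts z i) + Ffun n (midpts z)"
proof -
  have "\<And>i. omega (z i) (z (i+1)) = 2 * omega (z i) (midpts z i)"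
  proof -
    fix i
    have "z (i+1) = 2 *\<^sub>R midpts z i - z i"
      unfolding midpts_def by (simp add: scaleR_add_right)
    then show "omega (z i) (z (i+1)) = 2 * omega (z i) (midpts z i)"
      by (simp add: om_diff_r om_scale_r om_self)
  qed
  then show ?thesis
    unfolding action_def Ffun_def keyform[symmetric]
    by (simp add: sum_distrib_left)
qed

lemma sgn_diff: "i \<le> (j::nat) \<Longrightarrow> (-1::real)^(j-i) = (-1)^(i+j)"
proof -
  assume "i \<le> j"
  then have "i + j = (j - i) + 2*i" by simp
  then have "(-1::real)^(i+j) = (-1)^((j - i) + 2*i)" by simp
  also have "\<dots> = (-1)^(j-i)" by (simp add: power_add power_mult)
  finally show ?thesis by simp
qed

lemma gident:
  fixes Q :: "nat \<Rightarrow> 'd::finite sympl"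
  shows "2 * ((\<Sum>i=1..n. ((-1::real)^(i+1)) *\<^sub>R fst (Q i)) \<bullet> (\<Sum>i=1..n. ((-1::real)^(i+1)) *\<^sub>R snd (Q i)))
    + 2 * (\<Sum>j=1..n. \<Sum>i=1..<j. (-1) ^ (i + j - 1) * omega (Q i) (Q j)) = Gfun n Q"
proof (induction n)
  case 0 then show ?case by (simp add: Gfun_def)
next
  case (Suc n)
  define X where "X = (\<Sum>i=1..n. ((-1::real)^(i+1)) *\<^sub>R fst (Q i))"
  define Y where "Y = (\<Sum>i=1..n. ((-1::real)^(i+1)) *\<^sub>R snd (Q i))"
  define a where "a = fst (Q (Suc n))"
  define b where "b = snd (Q (Suc n))"
  define s :: real where "s = (-1)^n"
  define D where "D m = (\<Sum>j=1..m. \<Sum>i=1..<j. (-1) ^ (i + j - 1) * omega (Q i) (Q j))" for m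
  define G2 where "G2 m = (\<Sum>i=1..m. fst (Q i) \<bullet> snd (Q i))" for m
  define G4 where "G4 m = (\<Sum>j=1..m. \<Sum>i=1..<j. (-1::real) ^ (j - i) * (fst (Q j) \<bullet> snd (Q i)))" for m
  have GG: "Gfun m Q = 2 * G2 m + 4 * G4 m" for m unfolding Gfun_def G2_def G4_def by simp
  have ss: "s * s = 1" unfolding s_def by (simp flip: power_add)
  have X1: "(\<Sum>i=1..Suc n. ((-1::real)^(i+1)) *\<^sub>R fst (Q i)) = X + s *\<^sub>R a"
    unfolding X_def a_def s_def by simp
  have Y1: "(\<Sum>i=1..Suc n. ((-1::real)^(i+1)) *\<^sub>R snd (Q i)) = Y + s *\<^sub>R b"
    unfolding Y_def b_def s_def by simp
  have XY: "(X + s *\<^sub>R a) \<bullet> (Y + s *\<^sub>R b) = X \<bullet> Y + s * (X \<bullet> b) + s * (a \<bullet> Y) + a \<bullet> b"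
    using ss by (simp add: inner_add_left inner_add_right algebra_simps)
  have Xb: "s * (X \<bullet> b) = - (\<Sum>i=1..n. (-1)^(i+n) * (fst (Q i) \<bullet> b))"
    unfolding X_def s_def by (simp add: inner_sum_left sum_distrib_left sum_negf[symmetric] power_add mult_ac)
  have aY: "s * (a \<bullet> Y) = - (\<Sum>i=1..n. (-1)^(i+n) * (a \<bullet> snd (Q i)))"
    unfolding Y_def s_def by (simp add: inner_sum_right sum_distrib_left sum_negf[symmetric] power_add mult_ac)
  have d: "D (Suc n) = D n + (\<Sum>i=1..n. (-1)^(i+n) * (fst (Q i) \<bullet> b - a \<bullet> snd (Q i)))"
  proof -
    have "(\<Sum>i=1..<Suc n. (-1) ^ (i + Suc n - 1) * omega (Q i) (Q (Suc n)))
      = (\<Sum>i=1..n. (-1)^(i+n) * (fst (Q i) \<bullet> b - a \<bullet> snd (Q i)))"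
      by (intro sum.cong) (auto simp: omega_def a_def b_def inner_commute)
    then show ?thesis unfolding D_def by simp
  qed
  have g2: "G2 (Suc n) = G2 n + a \<bullet> b" unfolding G2_def a_def b_def by simp
  have g4: "G4 (Suc n) = G4 n - (\<Sum>i=1..n. (-1)^(i+n) * (a \<bullet> snd (Q i)))"
  proof -
    have "(\<Sum>i=1..<Suc n. (-1::real) ^ (Suc n - i) * (fst (Q (Suc n)) \<bullet> snd (Q i)))
      = (\<Sum>i=1..n. - ((-1)^(i+n) * (a \<bullet> snd (Q i))))"
      by (intro sum.cong) (auto simp: a_def sgn_diff)
    then show ?thesis unfolding G4_def by (simp add: sum_negf)
  qed
  have IH: "2 * (X \<bullet> Y) + 2 * D n = 2 * G2 n + 4 * G4 n"
    using Suc unfolding X_def Y_def D_def GG by simp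
  show ?case
    unfolding X1 Y1 XY D_def[symmetric] d GG g2 g4
    using IH Xb aY by (simp add: algebra_simps sum_subtractf)
qed

theorem mainTheorem12:
  fixes P :: "('d::finite sympl \<times> 'd sympl set) set"
    and n :: nat and z :: "nat \<Rightarrow> 'd sympl"
  assumes "immersed_closed_data P"
  shows "(periodic_orbit P n z \<and> odd n \<longrightarrow> action n z = Ffun n (midpts z))
       \<and> (link_orbit P n L1 L2 z \<longrightarrow> action n z = Gfun n (midpts z))"
proof (intro conjI impI)
  define W where "W = (\<Sum>i=1..n. ((-1::real)^(i+1)) *\<^sub>R midpts z i)"
  have A: "action n z = omega (z 1) W + Ffun n (midpts z)"
    unfolding W_def by (rule action_eq)
  have Z: "z (Suc n) = ((-1)^n) *\<^sub>R z 1 - 2 *\<^sub>R ((-1)^n) *\<^sub>R W"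
  proof -
    have "(\<Sum>i=1..n. ((-1::real)^(n+i)) *\<^sub>R midpts z i) = - (((-1)^n) *\<^sub>R W)"
      unfolding W_def by (simp add: scaleR_sum_right sum_negf[symmetric] power_add)
    then show ?thesis using zform[of z n] by simp
  qed
  {
    assume h: "periodic_orbit P n z \<and> odd n"
    then have "z (Suc n) = z 1" unfolding periodic_orbit_def by simp
    with Z h have "z 1 = - z 1 + 2 *\<^sub>R W" by simp
    then have "(2::real) *\<^sub>R (z 1 - W) = 0" by (simp add: algebra_simps scaleR_2)
    then have "z 1 = W" by simp
    then show "action n z = Ffun n (midpts z)" using A om_self by simp
  }
  {
    assume h: "link_orbit P n L1 L2 z"
    then have s0: "snd (z 1) = 0" and f0: "fst (z (Suc n)) = 0"
      unfolding link_orbit_def L1_def L2_def by auto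
    have "fst (z 1) = 2 *\<^sub>R fst W"
    proof -
      have "0 = ((-1::real)^n) *\<^sub>R (fst (z 1) - 2 *\<^sub>R fst W)"
        using f0 Z by (simp add: algebra_simps)
      then show ?thesis by simp
    qed
    then have o: "omega (z 1) W = 2 * (fst W \<bullet> snd W)"
      unfolding omega_def using s0 by simp
    have fW: "fst W = (\<Sum>i=1..n. ((-1::real)^(i+1)) *\<^sub>R fst (midpts z i))"
      and sW: "snd W = (\<Sum>i=1..n. ((-1::real)^(i+1)) *\<^sub>R snd (midpts z i))"
      unfolding W_def by (simp_all add: fst_sum snd_sum)
    show "action n z = Gfun n (midpts z)"
      unfolding A o fW sW Ffun_def gident[symmetric] by simp
  }
qed

end
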